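(* Let $G$ be a partial cube and let $f$ be a $\Theta$-graceful labeling of $G$. Let $C$ be an isometric $4$-cycle of $G$. Then for every two edges $xy$ and $uv$ of $C$ with $xy\,\Theta\,uv$, the following holds: $$d(x,u) < d(x,v) \ \Rightarrow\ f(x)+f(v) = f(y)+f(u),$$ where $d$ denotes the shortest-path distance in $G$.
   Context: A subgraph $H$ of a graph $G$ is isometric if $d_H(u,v)=d_G(u,v)$ for all vertices $u,v$ of $H$. A partial cube is a graph isomorphic to an isometric subgraph of some hypercube $Q_d$ (vertices: binary $d$-tuples, adjacent iff they differ in exactly one coordinate). The Djoković–Winkler relation $\Theta$ on the edges of $G$: edges $xy$ and $uv$ satisfy $xy\,\Theta\,uv$ iff $d(x,u)+d(y,v)\neq d(x,v)+d(y,u)$. On a partial cube $\Theta$ is an equivalence relation; its classes are called $\Theta$-classes. For a partial cube $G$ on $n$ vertices, a bijection $f:V(G)\to\{0,1,\ldots,n-1\}$ is a $\Theta$-graceful labeling if, labeling each edge $xy$ by $|f(x)-f(y)|$, all edges in the same $\Theta$-class receive the same label and distinct $\Theta$-classes receive distinct labels. *)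

theory Defs
  imports Main
begin

definition simple_graph :: "'a set \<Rightarrow> ('a \<Rightarrow> 'a \<Rightarrow> bool) \<Rightarrow> bool" where
  "simple_graph V E \<longleftrightarrow> finite V \<and> (\<forall>u v. E u v \<longrightarrow> u \<in> V \<and> v \<in> V \<and> u \<noteq> v \<and> E v u)"

definition walk :: "'a set \<Rightarrow> ('a \<Rightarrow> 'a \<Rightarrow> bool) \<Rightarrow> 'a list \<Rightarrow> bool" where
  "walk V E p \<longleftrightarrow> p \<noteq> [] \<and> set p \<subseteq> V \<and> (\<forall>i. Suc i < length p \<longrightarrow> E (p ! i) (p ! Suc i))"

definition dist :: "'a set \<Rightarrow> ('a \<Rightarrow> 'a \<Rightarrow> bool) \<Rightarrow> 'a \<Rightarrow> 'a \<Rightarrow> nat" where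
  "dist V E u v = (LEAST n. \<exists>p. walk V E p \<and> hd p = u \<and> last p = v \<and> length p = Suc n)"

definition isometric_subgraph ::
  "'a set \<Rightarrow> ('a \<Rightarrow> 'a \<Rightarrow> bool) \<Rightarrow> 'a set \<Rightarrow> ('a \<Rightarrow> 'a \<Rightarrow> bool) \<Rightarrow> bool" where
  "isometric_subgraph V E W F \<longleftrightarrow> W \<subseteq> V \<and> (\<forall>u v. F u v \<longrightarrow> u \<in> W \<and> v \<in> W \<and> E u v)
     \<and> (\<forall>u\<in>W. \<forall>v\<in>W. dist W F u v = dist V E u v)"

definition cube_verts :: "nat \<Rightarrow> bool list set" where
  "cube_verts d = {xs. length xs = d}"

definition cube_adj :: "nat \<Rightarrow> bool list \<Rightarrow> bool list \<Rightarrow> bool" where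
  "cube_adj d xs ys \<longleftrightarrow> xs \<in> cube_verts d \<and> ys \<in> cube_verts d
     \<and> card {i. i < d \<and> xs ! i \<noteq> ys ! i} = 1"

definition partial_cube :: "'a set \<Rightarrow> ('a \<Rightarrow> 'a \<Rightarrow> bool) \<Rightarrow> bool" where
  "partial_cube V E \<longleftrightarrow> simple_graph V E \<and>
     (\<exists>d (\<phi> :: 'a \<Rightarrow> bool list). inj_on \<phi> V \<and>
        isometric_subgraph (cube_verts d) (cube_adj d) (\<phi> ` V)
          (\<lambda>a b. \<exists>u\<in>V. \<exists>v\<in>V. a = \<phi> u \<and> b = \<phi> v \<and> E u v))"

definition Theta :: "'a set \<Rightarrow> ('a \<Rightarrow> 'a \<Rightarrow> bool) \<Rightarrow> 'a \<times> 'a \<Rightarrow> 'a \<times> 'a \<Rightarrow> bool" where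
  "Theta V E e e' = (case (e, e') of ((x, y), (u, v)) \<Rightarrow>
     dist V E x u + dist V E y v \<noteq> dist V E x v + dist V E y u)"

text \<open>Theta-graceful labeling: bijection onto {0..n-1}; two edges get the same label
  iff they lie in the same Theta-class (i.e. are Theta-related, Theta being an
  equivalence on partial cubes).\<close>
definition theta_graceful :: "'a set \<Rightarrow> ('a \<Rightarrow> 'a \<Rightarrow> bool) \<Rightarrow> ('a \<Rightarrow> nat) \<Rightarrow> bool" where
  "theta_graceful V E f \<longleftrightarrow> bij_betw f V {0..<card V} \<and>
     (\<forall>x y u v. E x y \<longrightarrow> E u v \<longrightarrow>
        (Theta V E (x, y) (u, v) \<longleftrightarrow> \<bar>int (f x) - int (f y)\<bar> = \<bar>int (f u) - int (f v)\<bar>))"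

definition cyc4_adj :: "'a \<Rightarrow> 'a \<Rightarrow> 'a \<Rightarrow> 'a \<Rightarrow> 'a \<Rightarrow> 'a \<Rightarrow> bool" where
  "cyc4_adj c0 c1 c2 c3 a b \<longleftrightarrow>
     {a, b} = {c0, c1} \<or> {a, b} = {c1, c2} \<or> {a, b} = {c2, c3} \<or> {a, b} = {c3, c0}"

definition isometric_4cycle :: "'a set \<Rightarrow> ('a \<Rightarrow> 'a \<Rightarrow> bool) \<Rightarrow> 'a \<Rightarrow> 'a \<Rightarrow> 'a \<Rightarrow> 'a \<Rightarrow> bool" where
  "isometric_4cycle V E c0 c1 c2 c3 \<longleftrightarrow> distinct [c0, c1, c2, c3] \<and>
     isometric_subgraph V E {c0, c1, c2, c3} (cyc4_adj c0 c1 c2 c3)"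

end

theory Submission
  imports Defs
begin

lemma dist_le:
  assumes "walk V E p" "hd p = u" "last p = v"
  shows "dist V E u v \<le> length p - 1"
  unfolding dist_def
  by (rule Least_le) (use assms in \<open>auto simp: walk_def intro!: exI[of _ p]\<close>)

lemma dist_attained:
  assumes "walk V E p" "hd p = u" "last p = v"
  shows "\<exists>q. walk V E q \<and> hd q = u \<and> last q = v \<and> length q = Suc (dist V E u v)"
proof -
  have "\<exists>n p. walk V E p \<and> hd p = u \<and> last p = v \<and> length p = Suc n"
    using assms by (intro exI[of _ "length p - 1"] exI[of _ p]) (auto simp: walk_def)
  then show ?thesis unfolding dist_def by (rule LeastI_ex)
qed

lemma dist0:
  assumes "walk V E p" "hd p = u" "last p = v" "dist V E u v = 0"
  shows "u = v"
proof -
  obtain q where "walk V E q" "hd q = u" "last q = v" "length q = 1"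
    using dist_attained[OF assms(1-3)] assms(4) by auto
  then show ?thesis by (cases q) auto
qed

lemma dist1:
  assumes "walk V E p" "hd p = u" "last p = v" "dist V E u v = 1"
  shows "E u v"
proof -
  obtain q where q: "walk V E q" "hd q = u" "last q = v" "length q = 2"
    using dist_attained[OF assms(1-3)] assms(4) by auto
  then obtain a b where "q = [a, b]"
    by (cases q; cases "tl q") auto
  then show ?thesis using q unfolding walk_def by auto
qed

lemma key:
  fixes a b c d :: int
  assumes "\<bar>a - b\<bar> = \<bar>d - c\<bar>" "\<bar>a - d\<bar> = \<bar>b - c\<bar>" "b \<noteq> d" "a \<noteq> b"
  shows "a + c = b + d"
  using assms by (auto simp: abs_if split: if_splits)

theorem lemma1:
  fixes V :: "'a set" and E :: "'a \<Rightarrow> 'a \<Rightarrow> bool" and f :: "'a \<Rightarrow> nat"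
    and c0 c1 c2 c3 x y u v :: 'a
  assumes "partial_cube V E"
    and "theta_graceful V E f"
    and "isometric_4cycle V E c0 c1 c2 c3"
    and "cyc4_adj c0 c1 c2 c3 x y"
    and "cyc4_adj c0 c1 c2 c3 u v"
    and "Theta V E (x, y) (u, v)"
    and "dist V E x u < dist V E x v"
  shows "f x + f v = f y + f u"
proof -
  let ?W = "{c0, c1, c2, c3}"
  let ?F = "cyc4_adj c0 c1 c2 c3"
  have dis: "distinct [c0, c1, c2, c3]" and iso: "isometric_subgraph V E ?W ?F"
    using assms(3) unfolding isometric_4cycle_def by auto
  have WV: "?W \<subseteq> V" and FE: "\<And>a b. ?F a b \<Longrightarrow> E a b"
    and dd: "\<And>a b. a \<in> ?W \<Longrightarrow> b \<in> ?W \<Longrightarrow> dist ?W ?F a b = dist V E a b"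
    using iso unfolding isometric_subgraph_def by auto
  have w1: "walk ?W ?F [a]" if "a \<in> ?W" for a using that by (auto simp: walk_def)
  have w2: "walk ?W ?F [a, b]" if "a \<in> ?W" "b \<in> ?W" "?F a b" for a b
    using that by (auto simp: walk_def less_Suc_eq)
  have w3: "walk ?W ?F [a, b, c]" if "a \<in> ?W" "b \<in> ?W" "c \<in> ?W" "?F a b" "?F b c" for a b c
    using that by (auto simp: walk_def less_Suc_eq nth_Cons split: nat.splits)
  have D0: "dist V E a a = 0" if "a \<in> ?W" for a
    using dist_le[OF w1[OF that]] dd[OF that that] by simp
  have D1: "dist V E a b = 1" if "a \<in> ?W" "b \<in> ?W" "?F a b" "a \<noteq> b" for a b
  proof -
    have "dist ?W ?F a b \<le> 1" using dist_le[OF w2[OF that(1-3)]] by simp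
    moreover have "dist ?W ?F a b \<noteq> 0" using dist0[OF w2[OF that(1-3)]] that(4) by auto
    ultimately show ?thesis using dd[OF that(1,2)] by simp
  qed
  have D2: "dist V E a c = 2" if "a \<in> ?W" "b \<in> ?W" "c \<in> ?W" "?F a b" "?F b c" "a \<noteq> c" "\<not> ?F a c" for a b c
  proof -
    have "dist ?W ?F a c \<le> 2" using dist_le[OF w3[OF that(1-5)], of a c] by simp
    moreover have "dist ?W ?F a c \<noteq> 0" using dist0[OF w3[OF that(1-5)]] that(6) by auto
    moreover have "dist ?W ?F a c \<noteq> 1" using dist1[OF w3[OF that(1-5)]] that(7) by auto
    ultimately show ?thesis using dd[OF that(1,3)] by simp
  qed
  have F: "?F c0 c1" "?F c1 c0" "?F c1 c2" "?F c2 c1" "?F c2 c3" "?F c3 c2" "?F c3 c0" "?F c0 c3"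
    by (auto simp: cyc4_adj_def)
  have nF: "\<not> ?F c0 c2" "\<not> ?F c2 c0" "\<not> ?F c1 c3" "\<not> ?F c3 c1"
    using dis by (auto simp: cyc4_adj_def doubleton_eq_iff)
  have dists:
    "dist V E c0 c0 = 0" "dist V E c1 c1 = 0" "dist V E c2 c2 = 0" "dist V E c3 c3 = 0"
    "dist V E c0 c1 = 1" "dist V E c1 c0 = 1" "dist V E c1 c2 = 1" "dist V E c2 c1 = 1"
    "dist V E c2 c3 = 1" "dist V E c3 c2 = 1" "dist V E c3 c0 = 1" "dist V E c0 c3 = 1"
    "dist V E c0 c2 = 2" "dist V E c2 c0 = 2" "dist V E c1 c3 = 2" "dist V E c3 c1 = 2"
    using D0 D1 F nF dis
      D2[of c0 c1 c2] D2[of c2 c1 c0] D2[of c1 c2 c3] D2[of c3 c2 c1]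
    by auto
  have gr: "bij_betw f V {0..<card V}" and
    gl: "\<And>x y u v. E x y \<Longrightarrow> E u v \<Longrightarrow>
        (Theta V E (x, y) (u, v) \<longleftrightarrow> \<bar>int (f x) - int (f y)\<bar> = \<bar>int (f u) - int (f v)\<bar>)"
    using assms(2) unfolding theta_graceful_def by auto
  have inj: "inj_on f V" using gr bij_betw_def by blast
  have fne: "f c1 \<noteq> f c3" "f c0 \<noteq> f c2" "f c0 \<noteq> f c1" "f c1 \<noteq> f c2"
    using inj WV dis unfolding inj_on_def by auto
  have T1: "\<bar>int (f c0) - int (f c1)\<bar> = \<bar>int (f c3) - int (f c2)\<bar>"
    using gl[OF FE[OF F(1)] FE[OF F(6)]] dists by (simp add: Theta_def)
  have T2: "\<bar>int (f c0) - int (f c3)\<bar> = \<bar>int (f c1) - int (f c2)\<bar>"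
    using gl[OF FE[OF F(8)] FE[OF F(3)]] dists by (simp add: Theta_def)
  have K: "int (f c0) + int (f c2) = int (f c1) + int (f c3)"
    using key[OF T1 T2] fne by simp
  show ?thesis
    using assms(4-7) K dists unfolding cyc4_adj_def Theta_def
    by (auto simp: doubleton_eq_iff)
qed

end
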